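(* Let $G$ be a hypo-efficient domination graph that is also a vertex domination-critical graph. Then for every vertex $v\in V(G)$, the graph $G-v$ has exactly one efficient dominating set. If in addition $G$ is regular, then $G$ is a hypo-unique domination graph.
   Context: All graphs are finite, simple and undirected. For $v\in V(G)$, $N[v]$ is the closed neighborhood of $v$. A set $D\subseteq V(G)$ is dominating if every vertex of $G$ not in $D$ has a neighbor in $D$; $\gamma(G)$ is the minimum size of a dominating set, and a dominating set of size $\gamma(G)$ is a $\gamma$-set. A vertex $v$ is $\gamma$-critical if $\gamma(G-v)<\gamma(G)$; $G$ is a vertex domination-critical graph if every vertex is $\gamma$-critical. A set $D\subseteq V(H)$ is an efficient dominating set (EDS) of $H$ if $|N_H[v]\cap D|=1$ for every $v\in V(H)$. $G$ is a hypo-efficient domination graph if $G$ has no EDS but $G-v$ has at least one EDS for every $v\in V(G)$. $G$ is a hypo-unique domination graph if $G$ has at least two $\gamma$-sets but $G-v$ has exactly one $\gamma$-set for every $v\in V(G)$. *)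

theory Defs
  imports Main
begin

definition graph :: "'a set \<Rightarrow> ('a \<Rightarrow> 'a \<Rightarrow> bool) \<Rightarrow> bool" where
  "graph V E \<longleftrightarrow> finite V \<and> (\<forall>u v. E u v \<longrightarrow> u \<in> V \<and> v \<in> V) \<and>
     (\<forall>u v. E u v \<longrightarrow> E v u) \<and> (\<forall>v. \<not> E v v)"

definition del_vertex :: "('a \<Rightarrow> 'a \<Rightarrow> bool) \<Rightarrow> 'a \<Rightarrow> 'a \<Rightarrow> 'a \<Rightarrow> bool" where
  "del_vertex E v = (\<lambda>x y. E x y \<and> x \<noteq> v \<and> y \<noteq> v)"

definition closed_nbhd :: "'a set \<Rightarrow> ('a \<Rightarrow> 'a \<Rightarrow> bool) \<Rightarrow> 'a \<Rightarrow> 'a set" where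
  "closed_nbhd V E v = {u \<in> V. u = v \<or> E v u}"

definition degree :: "'a set \<Rightarrow> ('a \<Rightarrow> 'a \<Rightarrow> bool) \<Rightarrow> 'a \<Rightarrow> nat" where
  "degree V E v = card {u \<in> V. E v u}"

definition regular :: "'a set \<Rightarrow> ('a \<Rightarrow> 'a \<Rightarrow> bool) \<Rightarrow> bool" where
  "regular V E \<longleftrightarrow> (\<exists>k. \<forall>v\<in>V. degree V E v = k)"

definition dominating :: "'a set \<Rightarrow> ('a \<Rightarrow> 'a \<Rightarrow> bool) \<Rightarrow> 'a set \<Rightarrow> bool" where
  "dominating V E D \<longleftrightarrow> D \<subseteq> V \<and> (\<forall>v\<in>V - D. \<exists>u\<in>D. E v u)"

definition domination_number :: "'a set \<Rightarrow> ('a \<Rightarrow> 'a \<Rightarrow> bool) \<Rightarrow> nat" where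
  "domination_number V E = (LEAST k. \<exists>D. dominating V E D \<and> card D = k)"

definition gamma_set :: "'a set \<Rightarrow> ('a \<Rightarrow> 'a \<Rightarrow> bool) \<Rightarrow> 'a set \<Rightarrow> bool" where
  "gamma_set V E D \<longleftrightarrow> dominating V E D \<and> card D = domination_number V E"

definition vertex_domination_critical :: "'a set \<Rightarrow> ('a \<Rightarrow> 'a \<Rightarrow> bool) \<Rightarrow> bool" where
  "vertex_domination_critical V E \<longleftrightarrow>
     (\<forall>v\<in>V. domination_number (V - {v}) (del_vertex E v) < domination_number V E)"

definition efficient_dominating :: "'a set \<Rightarrow> ('a \<Rightarrow> 'a \<Rightarrow> bool) \<Rightarrow> 'a set \<Rightarrow> bool" where
  "efficient_dominating V E D \<longleftrightarrow> D \<subseteq> V \<and> (\<forall>v\<in>V. card (closed_nbhd V E v \<inter> D) = 1)"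

definition hypo_efficient :: "'a set \<Rightarrow> ('a \<Rightarrow> 'a \<Rightarrow> bool) \<Rightarrow> bool" where
  "hypo_efficient V E \<longleftrightarrow> \<not> (\<exists>D. efficient_dominating V E D) \<and>
     (\<forall>v\<in>V. \<exists>D. efficient_dominating (V - {v}) (del_vertex E v) D)"

definition hypo_unique :: "'a set \<Rightarrow> ('a \<Rightarrow> 'a \<Rightarrow> bool) \<Rightarrow> bool" where
  "hypo_unique V E \<longleftrightarrow> (\<exists>D1 D2. D1 \<noteq> D2 \<and> gamma_set V E D1 \<and> gamma_set V E D2) \<and>
     (\<forall>v\<in>V. \<exists>!D. gamma_set (V - {v}) (del_vertex E v) D)"

end

theory Submission
  imports Defs
begin

lemma graph_fin: "graph V E \<Longrightarrow> finite V" by (simp add: graph_def)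

lemma nbhd_sub: "closed_nbhd V E u \<subseteq> V" by (auto simp: closed_nbhd_def)

lemma fin_nbhd: "finite V \<Longrightarrow> finite (closed_nbhd V E u)"
  using nbhd_sub[of V E u] by (rule finite_subset)

lemma nbhd_sym:
  assumes "graph V E" "u \<in> V" "z \<in> V"
  shows "z \<in> closed_nbhd V E u \<longleftrightarrow> u \<in> closed_nbhd V E z"
  using assms by (auto simp: closed_nbhd_def graph_def)

lemma graph_del: "graph V E \<Longrightarrow> graph (V - {v}) (del_vertex E v)"
  by (auto simp: graph_def del_vertex_def)

lemma nbhd_del: "u \<noteq> v \<Longrightarrow>
  closed_nbhd (V - {v}) (del_vertex E v) u = closed_nbhd V E u - {v}"
  by (auto simp: closed_nbhd_def del_vertex_def)

lemma swap_sum: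
  fixes f :: "'a \<Rightarrow> 'b::comm_semiring_1"
  assumes g: "graph V E" and X: "X \<subseteq> V"
  shows "(\<Sum>u\<in>X. \<Sum>z\<in>closed_nbhd V E u. f z)
       = (\<Sum>z\<in>V. f z * of_nat (card (closed_nbhd V E z \<inter> X)))"
proof -
  have fin: "finite V" using g by (simp add: graph_def)
  have finX: "finite X" using X fin by (rule finite_subset)
  have "(\<Sum>u\<in>X. \<Sum>z\<in>closed_nbhd V E u. f z)
      = (\<Sum>u\<in>X. \<Sum>z\<in>V. if u \<in> closed_nbhd V E z then f z else 0)"
  proof (rule sum.cong[OF refl])
    fix u assume u: "u \<in> X"
    have "closed_nbhd V E u = V \<inter> closed_nbhd V E u" using nbhd_sub[of V E u] by blast
    hence "(\<Sum>z\<in>closed_nbhd V E u. f z) = (\<Sum>z\<in>V. if z \<in> closed_nbhd V E u then f z else 0)"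
      using sum.inter_restrict[OF fin, of f "closed_nbhd V E u"] by simp
    also have "\<dots> = (\<Sum>z\<in>V. if u \<in> closed_nbhd V E z then f z else 0)"
    proof (rule sum.cong[OF refl])
      fix z assume z: "z \<in> V"
      have "u \<in> V" using u X by blast
      then show "(if z \<in> closed_nbhd V E u then f z else 0) = (if u \<in> closed_nbhd V E z then f z else 0)"
        using nbhd_sym[OF g _ z] by simp
    qed
    finally show "(\<Sum>z\<in>closed_nbhd V E u. f z) = (\<Sum>z\<in>V. if u \<in> closed_nbhd V E z then f z else 0)" .
  qed
  also have "\<dots> = (\<Sum>z\<in>V. \<Sum>u\<in>X. if u \<in> closed_nbhd V E z then f z else 0)"
    by (rule sum.swap)
  also have "\<dots> = (\<Sum>z\<in>V. f z * of_nat (card (closed_nbhd V E z \<inter> X)))"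
  proof (rule sum.cong[OF refl])
    fix z
    have "(\<Sum>u\<in>X. if u \<in> closed_nbhd V E z then f z else 0) = (\<Sum>u\<in>X \<inter> closed_nbhd V E z. f z)"
      using sum.inter_restrict[OF finX, of "\<lambda>_. f z" "closed_nbhd V E z"] by simp
    also have "\<dots> = f z * of_nat (card (closed_nbhd V E z \<inter> X))"
      by (simp add: Int_commute mult.commute)
    finally show "(\<Sum>u\<in>X. if u \<in> closed_nbhd V E z then f z else 0) = f z * of_nat (card (closed_nbhd V E z \<inter> X))" .
  qed
  finally show ?thesis .
qed

lemma dom_le: "dominating V E D \<Longrightarrow> domination_number V E \<le> card D"
  unfolding domination_number_def by (rule Least_le) blast

lemma dom_ex: "\<exists>S. dominating V E S \<and> card S = domination_number V E"
proof -
  have "dominating V E V" by (simp add: dominating_def)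
  then have "\<exists>k. \<exists>D. dominating V E D \<and> card D = k" by blast
  then show ?thesis unfolding domination_number_def by (rule LeastI_ex)
qed

lemma eds_dom:
  assumes D: "efficient_dominating V E D"
  shows "dominating V E D"
  unfolding dominating_def
proof (intro conjI ballI)
  show "D \<subseteq> V" using D by (simp add: efficient_dominating_def)
  fix v assume v: "v \<in> V - D"
  then have "card (closed_nbhd V E v \<inter> D) = 1" using D by (simp add: efficient_dominating_def)
  then obtain x where "closed_nbhd V E v \<inter> D = {x}" by (rule card_1_singletonE)
  then show "\<exists>u\<in>D. E v u" using v by (auto simp: closed_nbhd_def)
qed

lemma eds_le:
  assumes g: "graph V E" and D: "efficient_dominating V E D" and S: "dominating V E S"
  shows "card D \<le> card S"
proof -
  have fin: "finite V" using g by (simp add: graph_def)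
  have ex: "\<exists>s. s \<in> closed_nbhd V E d \<inter> S" if "d \<in> D" for d
  proof -
    have dV: "d \<in> V" using D that by (auto simp: efficient_dominating_def)
    show ?thesis
    proof (cases "d \<in> S")
      case True
      then have "d \<in> closed_nbhd V E d \<inter> S" using dV by (simp add: closed_nbhd_def)
      then show ?thesis by blast
    next
      case False
      then obtain s where "s \<in> S" "E d s" using S dV by (auto simp: dominating_def)
      moreover have "s \<in> V" using S \<open>s \<in> S\<close> by (auto simp: dominating_def)
      ultimately have "s \<in> closed_nbhd V E d \<inter> S" by (simp add: closed_nbhd_def)
      then show ?thesis by blast
    qed
  qed
  define f where "f d = (SOME s. s \<in> closed_nbhd V E d \<inter> S)" for d
  have f: "f d \<in> closed_nbhd V E d \<inter> S" if "d \<in> D" for d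
    unfolding f_def using ex[OF that] by (rule someI_ex)
  have DV: "D \<subseteq> V" using D by (simp add: efficient_dominating_def)
  have inj: "inj_on f D"
  proof (rule inj_onI)
    fix d1 d2 assume d1: "d1 \<in> D" and d2: "d2 \<in> D" and eq: "f d1 = f d2"
    define s where "s = f d1"
    have s1: "s \<in> closed_nbhd V E d1" using f[OF d1] unfolding s_def by blast
    have s2: "s \<in> closed_nbhd V E d2" using f[OF d2] eq unfolding s_def by simp
    have sV: "s \<in> V" using s1 nbhd_sub[of V E d1] by blast
    have d1V: "d1 \<in> V" and d2V: "d2 \<in> V" using d1 d2 DV by auto
    have n1: "d1 \<in> closed_nbhd V E s" using nbhd_sym[OF g d1V sV] s1 by simp
    have n2: "d2 \<in> closed_nbhd V E s" using nbhd_sym[OF g d2V sV] s2 by simp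
    have "card (closed_nbhd V E s \<inter> D) = 1" using D sV by (simp add: efficient_dominating_def)
    then obtain x where x: "closed_nbhd V E s \<inter> D = {x}" by (rule card_1_singletonE)
    have "d1 = x" using x n1 d1 by blast
    moreover have "d2 = x" using x n2 d2 by blast
    ultimately show "d1 = d2" by simp
  qed
  have im: "f ` D \<subseteq> S" using f by blast
  have "S \<subseteq> V" using S by (simp add: dominating_def)
  then have "finite S" using fin by (rule finite_subset)
  then show ?thesis using inj im card_inj_on_le by blast
qed

lemma crit_eds:
  assumes g: "graph V E" and c: "vertex_domination_critical V E" and w: "w \<in> V"
    and D: "efficient_dominating (V - {w}) (del_vertex E w) D"
  shows "card D = domination_number (V - {w}) (del_vertex E w)"
    and "\<forall>u\<in>V. card (closed_nbhd V E u \<inter> D) = (if u = w then 0 else 1)"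
proof -
  have g': "graph (V - {w}) (del_vertex E w)" using g by (rule graph_del)
  have Dd: "dominating (V - {w}) (del_vertex E w) D" using D by (rule eds_dom)
  obtain S where S: "dominating (V - {w}) (del_vertex E w) S"
     "card S = domination_number (V - {w}) (del_vertex E w)" using dom_ex by blast
  show cD: "card D = domination_number (V - {w}) (del_vertex E w)"
    using dom_le[OF Dd] eds_le[OF g' D S(1)] S(2) by simp
  have DV: "D \<subseteq> V - {w}" using D by (simp add: efficient_dominating_def)
  have noadj: "\<not> E w d" if "d \<in> D" for d
  proof
    assume Ewd: "E w d"
    have "dominating V E D"
      unfolding dominating_def
    proof (intro conjI ballI)
      show "D \<subseteq> V" using DV by blast
      fix u assume u: "u \<in> V - D"
      show "\<exists>x\<in>D. E u x"
      proof (cases "u = w")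
        case True then show ?thesis using Ewd that by blast
      next
        case False
        then have "card (closed_nbhd (V - {w}) (del_vertex E w) u \<inter> D) = 1"
          using D u by (simp add: efficient_dominating_def)
        then obtain x where "closed_nbhd (V - {w}) (del_vertex E w) u \<inter> D = {x}"
          by (rule card_1_singletonE)
        then show ?thesis using u by (auto simp: closed_nbhd_def del_vertex_def)
      qed
    qed
    then have "domination_number V E \<le> card D" by (rule dom_le)
    moreover have "domination_number (V - {w}) (del_vertex E w) < domination_number V E"
      using c w by (simp add: vertex_domination_critical_def)
    ultimately show False using cD by simp
  qed
  show "\<forall>u\<in>V. card (closed_nbhd V E u \<inter> D) = (if u = w then 0 else 1)"
  proof
    fix u assume u: "u \<in> V"
    show "card (closed_nbhd V E u \<inter> D) = (if u = w then 0 else 1)"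
    proof (cases "u = w")
      case True
      then have "closed_nbhd V E u \<inter> D = {}" using noadj DV by (auto simp: closed_nbhd_def)
      then show ?thesis using True by simp
    next
      case False
      have "closed_nbhd V E u \<inter> D = closed_nbhd (V - {w}) (del_vertex E w) u \<inter> D"
        using nbhd_del[OF False] DV by blast
      then show ?thesis using False D u by (simp add: efficient_dominating_def)
    qed
  qed
qed

lemma card_V_ge2:
  assumes g: "graph V E" and h: "\<not> (\<exists>D. efficient_dominating V E D)"
  shows "2 \<le> card V"
proof (rule ccontr)
  assume "\<not> 2 \<le> card V"
  then have "card V = 0 \<or> card V = 1" by linarith
  moreover have "finite V" using g by (simp add: graph_def)
  ultimately have "V = {} \<or> (\<exists>a. V = {a})" using card_1_singletonE by auto
  then have "efficient_dominating V E V"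
    by (auto simp: efficient_dominating_def closed_nbhd_def)
  then show False using h by blast
qed

lemma uniq_eds:
  assumes g: "graph V E" and c: "vertex_domination_critical V E" and he: "hypo_efficient V E"
    and v: "v \<in> V"
    and D1: "efficient_dominating (V - {v}) (del_vertex E v) D1"
    and D2: "efficient_dominating (V - {v}) (del_vertex E v) D2"
  shows "D1 = D2"
proof -
  have fin: "finite V" using g by (simp add: graph_def)
  have V2: "2 \<le> card V" using card_V_ge2[OF g] he by (simp add: hypo_efficient_def)
  define y where "y z = (of_bool (z \<in> D1) - of_bool (z \<in> D2) :: int)" for z
  have c1: "\<forall>u\<in>V. card (closed_nbhd V E u \<inter> D1) = (if u = v then 0 else 1)"
    using crit_eds(2)[OF g c v D1] .
  have c2: "\<forall>u\<in>V. card (closed_nbhd V E u \<inter> D2) = (if u = v then 0 else 1)"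
    using crit_eds(2)[OF g c v D2] .
  have F1: "(\<Sum>z\<in>closed_nbhd V E u. y z) = 0" if u: "u \<in> V" for u
  proof -
    have fn: "finite (closed_nbhd V E u)" using fin_nbhd[OF fin] .
    have "(\<Sum>z\<in>closed_nbhd V E u. y z) = int (card (closed_nbhd V E u \<inter> D1)) - int (card (closed_nbhd V E u \<inter> D2))"
      unfolding y_def using fn by (simp add: sum_subtractf Int_def)
    then show ?thesis using c1 c2 u by simp
  qed
  define T where "T = (\<Sum>z\<in>V. y z)"
  have yT: "y w = T" if w: "w \<in> V" for w
  proof -
    obtain Dw where Dw: "efficient_dominating (V - {w}) (del_vertex E w) Dw"
      using he w by (auto simp: hypo_efficient_def)
    have DwV: "Dw \<subseteq> V" using Dw by (auto simp: efficient_dominating_def)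
    have cw: "\<forall>u\<in>V. card (closed_nbhd V E u \<inter> Dw) = (if u = w then 0 else 1)"
      using crit_eds(2)[OF g c w Dw] .
    have "0 = (\<Sum>u\<in>Dw. \<Sum>z\<in>closed_nbhd V E u. y z)"
      using F1 DwV by (simp add: subset_iff)
    also have "\<dots> = (\<Sum>z\<in>V. y z * of_nat (card (closed_nbhd V E z \<inter> Dw)))"
      by (rule swap_sum[OF g DwV])
    also have "\<dots> = (\<Sum>z\<in>V. if z = w then 0 else y z)"
      using cw by (intro sum.cong) auto
    also have "\<dots> = T - y w"
    proof -
      have "(\<Sum>z\<in>V. if z = w then 0 else y z) = (\<Sum>z\<in>V - {w}. if z = w then 0 else y z)"
        using sum.remove[OF fin w, of "\<lambda>z. if z = w then 0 else y z"] by simp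
      also have "\<dots> = (\<Sum>z\<in>V - {w}. y z)" by (rule sum.cong) auto
      also have "\<dots> = T - y w" unfolding T_def using sum.remove[OF fin w, of y] by simp
      finally show ?thesis .
    qed
    finally show ?thesis by simp
  qed
  have "(\<Sum>z\<in>V. y z) = (\<Sum>z\<in>V. T)" using yT by (intro sum.cong) auto
  then have "T = of_nat (card V) * T" unfolding T_def[symmetric] by simp
  then have "(of_nat (card V) - 1) * T = 0" by (simp add: algebra_simps)
  moreover have "of_nat (card V) - 1 \<noteq> (0::int)" using V2 by simp
  ultimately have "T = 0" by simp
  then have "\<forall>w\<in>V. y w = 0" using yT by simp
  moreover have "D1 \<subseteq> V" "D2 \<subseteq> V" using D1 D2 by (auto simp: efficient_dominating_def)
  ultimately show ?thesis unfolding y_def by (auto simp: of_bool_def split: if_splits)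
qed


lemma card_nbhd:
  assumes g: "graph V E" and s: "s \<in> V"
  shows "card (closed_nbhd V E s) = Suc (degree V E s)"
proof -
  have fin: "finite V" using g by (simp add: graph_def)
  have "closed_nbhd V E s = insert s {u \<in> V. E s u}" using s by (auto simp: closed_nbhd_def)
  moreover have "s \<notin> {u \<in> V. E s u}" using g by (simp add: graph_def)
  moreover have "finite {u \<in> V. E s u}" using fin by simp
  ultimately show ?thesis by (simp add: degree_def)
qed

lemma gamma_is_eds:
  assumes g: "graph V E" and c: "vertex_domination_critical V E" and v: "v \<in> V"
    and k: "\<forall>u\<in>V. degree V E u = k"
    and D: "efficient_dominating (V - {v}) (del_vertex E v) D"
    and S: "gamma_set (V - {v}) (del_vertex E v) S"
  shows "efficient_dominating (V - {v}) (del_vertex E v) S"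
proof -
  let ?V = "V - {v}" and ?E = "del_vertex E v"
  have fin: "finite V" using g by (simp add: graph_def)
  have finV': "finite ?V" using fin by simp
  have g': "graph ?V ?E" using g by (rule graph_del)
  have Sd: "dominating ?V ?E S" and cS: "card S = domination_number ?V ?E"
    using S by (auto simp: gamma_set_def)
  have SV: "S \<subseteq> ?V" using Sd by (simp add: dominating_def)
  have DV: "D \<subseteq> ?V" using D by (simp add: efficient_dominating_def)
  have cSD: "card S = card D" using cS crit_eds(1)[OF g c v D] by simp
  have ge1: "1 \<le> card (closed_nbhd ?V ?E u \<inter> S)" if u: "u \<in> ?V" for u
  proof -
    have "\<exists>x. x \<in> closed_nbhd ?V ?E u \<inter> S"
    proof (cases "u \<in> S")
      case True then show ?thesis using u by (auto simp: closed_nbhd_def)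
    next
      case False
      then obtain x where "x \<in> S" "?E u x" using Sd u by (auto simp: dominating_def)
      then show ?thesis using SV by (auto simp: closed_nbhd_def)
    qed
    then have "closed_nbhd ?V ?E u \<inter> S \<noteq> {}" by blast
    moreover have "finite (closed_nbhd ?V ?E u \<inter> S)" using fin_nbhd[OF finV'] by simp
    ultimately have "card (closed_nbhd ?V ?E u \<inter> S) > 0" by (simp add: card_gt_0_iff)
    then show ?thesis by simp
  qed
  have sw1: "(\<Sum>s\<in>S. card (closed_nbhd ?V ?E s)) = (\<Sum>u\<in>?V. card (closed_nbhd ?V ?E u \<inter> S))"
    using swap_sum[OF g' SV, of "\<lambda>_. 1::nat"] by simp
  have sw2: "(\<Sum>d\<in>D. card (closed_nbhd ?V ?E d)) = (\<Sum>u\<in>?V. card (closed_nbhd ?V ?E u \<inter> D))"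
    using swap_sum[OF g' DV, of "\<lambda>_. 1::nat"] by simp
  have leS: "card (closed_nbhd ?V ?E s) \<le> Suc k" if s: "s \<in> S" for s
  proof -
    have sv: "s \<noteq> v" "s \<in> V" using s SV by auto
    have "closed_nbhd ?V ?E s \<subseteq> closed_nbhd V E s" using nbhd_del[OF sv(1)] by blast
    then have "card (closed_nbhd ?V ?E s) \<le> card (closed_nbhd V E s)"
      using card_mono[OF fin_nbhd[OF fin]] by blast
    then show ?thesis using card_nbhd[OF g sv(2)] k sv(2) by simp
  qed
  have cv: "card (closed_nbhd V E v \<inter> D) = 0" using crit_eds(2)[OF g c v D] v by simp
  have empty: "closed_nbhd V E v \<inter> D = {}"
  proof -
    have "finite (closed_nbhd V E v \<inter> D)" using fin_nbhd[OF fin] by simp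
    then show ?thesis using cv by simp
  qed
  have eqD: "card (closed_nbhd ?V ?E d) = Suc k" if d: "d \<in> D" for d
  proof -
    have dv: "d \<noteq> v" "d \<in> V" using d DV by auto
    have "v \<notin> closed_nbhd V E d" using nbhd_sym[OF g dv(2) v] empty d by blast
    then have "closed_nbhd ?V ?E d = closed_nbhd V E d" using nbhd_del[OF dv(1)] by blast
    then show ?thesis using card_nbhd[OF g dv(2)] k dv(2) by simp
  qed
  have "(\<Sum>u\<in>?V. card (closed_nbhd ?V ?E u \<inter> S)) \<le> (\<Sum>s\<in>S. Suc k)"
    unfolding sw1[symmetric] using leS by (rule sum_mono)
  also have "\<dots> = (\<Sum>d\<in>D. Suc k)" using cSD by simp
  also have "\<dots> = (\<Sum>d\<in>D. card (closed_nbhd ?V ?E d))" using eqD by simp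
  also have "\<dots> = (\<Sum>u\<in>?V. card (closed_nbhd ?V ?E u \<inter> D))" by (rule sw2)
  also have "\<dots> = (\<Sum>u\<in>?V. 1)" using D by (simp add: efficient_dominating_def)
  finally have le: "(\<Sum>u\<in>?V. card (closed_nbhd ?V ?E u \<inter> S)) \<le> (\<Sum>u\<in>?V. 1)" .
  have "(\<Sum>u\<in>?V. card (closed_nbhd ?V ?E u \<inter> S) - 1) = (\<Sum>u\<in>?V. card (closed_nbhd ?V ?E u \<inter> S)) - (\<Sum>u\<in>?V. 1)"
    using ge1 by (rule sum_subtractf_nat)
  also have "\<dots> = 0" using le by simp
  finally have "\<forall>u\<in>?V. card (closed_nbhd ?V ?E u \<inter> S) - 1 = 0" using finV' by simp
  then have "\<forall>u\<in>?V. card (closed_nbhd ?V ?E u \<inter> S) = 1" using ge1 by (metis le_antisym diff_is_0_eq)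
  then show ?thesis using SV by (simp add: efficient_dominating_def)
qed

theorem theorem3p15:
  fixes V :: "'a set" and E :: "'a \<Rightarrow> 'a \<Rightarrow> bool"
  assumes "graph V E"
    and "hypo_efficient V E"
    and "vertex_domination_critical V E"
  shows "(\<forall>v\<in>V. \<exists>!D. efficient_dominating (V - {v}) (del_vertex E v) D)
       \<and> (regular V E \<longrightarrow> hypo_unique V E)"
proof -
  note g = assms(1) and he = assms(2) and c = assms(3)
  have fin: "finite V" using g by (simp add: graph_def)
  have exD: "\<exists>D. efficient_dominating (V - {v}) (del_vertex E v) D" if "v \<in> V" for v
    using he that by (simp add: hypo_efficient_def)
  have P1: "\<forall>v\<in>V. \<exists>!D. efficient_dominating (V - {v}) (del_vertex E v) D"
    using exD uniq_eds[OF g c he] by blast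
  have P2: "hypo_unique V E" if r: "regular V E"
  proof -
    obtain k where k: "\<forall>u\<in>V. degree V E u = k" using r by (auto simp: regular_def)
    have noeds: "\<not> (\<exists>D. efficient_dominating V E D)" using he by (simp add: hypo_efficient_def)
    have V2: "2 \<le> card V" using card_V_ge2[OF g noeds] .
    then obtain v where v: "v \<in> V" by fastforce
    have gD: "gamma_set (V - {u}) (del_vertex E u) D"
      if u: "u \<in> V" and D: "efficient_dominating (V - {u}) (del_vertex E u) D" for u D
      using crit_eds(1)[OF g c u D] eds_dom[OF D] by (simp add: gamma_set_def)
    have gI: "gamma_set V E (insert u D)"
      if u: "u \<in> V" and D: "efficient_dominating (V - {u}) (del_vertex E u) D" for u D
    proof -
      have DV: "D \<subseteq> V - {u}" using D by (simp add: efficient_dominating_def)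
      have dom: "dominating V E (insert u D)"
        unfolding dominating_def
      proof (intro conjI ballI)
        show "insert u D \<subseteq> V" using DV u by blast
        fix x assume x: "x \<in> V - insert u D"
        then have "card (closed_nbhd (V - {u}) (del_vertex E u) x \<inter> D) = 1"
          using D by (simp add: efficient_dominating_def)
        then obtain y where "closed_nbhd (V - {u}) (del_vertex E u) x \<inter> D = {y}"
          by (rule card_1_singletonE)
        then show "\<exists>y\<in>insert u D. E x y" using x by (auto simp: closed_nbhd_def del_vertex_def)
      qed
      have "finite D" using DV fin by (meson finite_Diff finite_subset)
      moreover have "u \<notin> D" using DV by blast
      ultimately have ci: "card (insert u D) = Suc (card D)" by simp
      have "domination_number (V - {u}) (del_vertex E u) < domination_number V E"
        using c u by (simp add: vertex_domination_critical_def)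
      then have "card (insert u D) \<le> domination_number V E" using ci crit_eds(1)[OF g c u D] by simp
      then show ?thesis using dom_le[OF dom] dom by (simp add: gamma_set_def)
    qed
    have k1: "k \<noteq> 0"
    proof
      assume k0: "k = 0"
      have "efficient_dominating V E V"
        unfolding efficient_dominating_def
      proof (intro conjI ballI)
        fix u assume u: "u \<in> V"
        have "{x \<in> V. E u x} = {}" using k k0 u fin by (simp add: degree_def)
        then have "closed_nbhd V E u \<inter> V = {u}" using u by (auto simp: closed_nbhd_def)
        then show "card (closed_nbhd V E u \<inter> V) = 1" by simp
      qed simp
      then show False using noeds by blast
    qed
    then have "card {x \<in> V. E v x} \<noteq> 0" using k v by (simp add: degree_def)
    then obtain w where w: "w \<in> V" "E v w" by (metis (no_types, lifting) card.empty empty_Collect_eq)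
    obtain Dv where Dv: "efficient_dominating (V - {v}) (del_vertex E v) Dv" using exD[OF v] by blast
    obtain Dw where Dw: "efficient_dominating (V - {w}) (del_vertex E w) Dw" using exD[OF w(1)] by blast
    have "w \<notin> Dv"
    proof
      assume "w \<in> Dv"
      then have "w \<in> closed_nbhd V E v \<inter> Dv" using w by (auto simp: closed_nbhd_def)
      moreover have "card (closed_nbhd V E v \<inter> Dv) = 0" using crit_eds(2)[OF g c v Dv] v by simp
      moreover have "finite (closed_nbhd V E v \<inter> Dv)" using fin_nbhd[OF fin] by simp
      ultimately show False by auto
    qed
    moreover have "w \<noteq> v" using w g by (auto simp: graph_def)
    ultimately have ne: "insert v Dv \<noteq> insert w Dw" by blast
    have two: "\<exists>D1 D2. D1 \<noteq> D2 \<and> gamma_set V E D1 \<and> gamma_set V E D2"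
      by (rule exI[of _ "insert v Dv"], rule exI[of _ "insert w Dw"])
         (intro conjI ne gI[OF v Dv] gI[OF w(1) Dw])
    have uq: "\<forall>u\<in>V. \<exists>!D. gamma_set (V - {u}) (del_vertex E u) D"
    proof
      fix u assume u: "u \<in> V"
      obtain Du where Du: "efficient_dominating (V - {u}) (del_vertex E u) Du" using exD[OF u] by blast
      show "\<exists>!D. gamma_set (V - {u}) (del_vertex E u) D"
      proof (rule ex1I[of _ Du])
        show "gamma_set (V - {u}) (del_vertex E u) Du" using gD[OF u Du] .
        fix S assume S: "gamma_set (V - {u}) (del_vertex E u) S"
        show "S = Du" using uniq_eds[OF g c he u gamma_is_eds[OF g c u k Du S] Du] .
      qed
    qed
    show ?thesis using two uq by (simp add: hypo_unique_def)
  qed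
  show ?thesis using P1 P2 by blast
qed

end
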